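(* The set $\mathcal{L}_{ME}=\{(M,q)\mid ME[U](M)>q\}$ is an observable hyperproperty. That is, for every rational $q$, the set of programs $\{M\mid ME[U](M)>q\}$ is an observable hyperproperty.
   Context: Stores map variables to values; $H$ is the high input variable and $O$ the low output variable. A trace is a sequence of stores. For a finite trace $t$, $t\circ t'$ is concatenation. A program is a set $M$ of infinite traces that is deterministic (two traces with the same initial value of $H$ are equal) and has a finite nonempty input domain $\mathbb{H}_M=\{\sigma_0(H)\}$. Input domains are unbounded in size. $M(h)$ is the output trace $(\sigma_1(O),\sigma_2(O),\dots)$ of the trace of $M$ starting with $H=h$. $\bot$ denotes termination. $M(h)=o$ means that for all $i$, $o_i=\bot$ or $M(h)_i=\bot$ or $M(h)_i=o_i$. For a distribution $\mu$ on $\mathbb{H}_M$, $\mu(O=o)=\sum_{h:M(h)=o}\mu(H=h)$, with conditional probabilities induced accordingly. $U$ is the uniform distribution on $\mathbb{H}_M$. Min-entropy QIF (log base 2): - $\mathcal{V}[\mu](X)=\max_x\mu(X=x)$. - $\mathcal{V}[\mu](X|Y)=\sum_y\mu(Y=y)\max_x\mu(X=x|Y=y)$. - $ME[\mu](M)=\log\frac1{\mathcal{V}[\mu](H)}-\log\frac1{\mathcal{V}[\mu](H|O)}$. $\mathit{Prop}$ is the set of programs; $\mathit{Obs}$ is the set of deterministic finite sets of finite traces. For $S\in\mathit{Obs}$ and $T\in\mathit{Prop}$, $S\le T$ iff every $t\in S$ has some $t'$ with $t\circ t'\in T$. $P\subseteq\mathit{Prop}$ is observable iff for every $S\in P$ there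 is $T\in\mathit{Obs}$ with $T\le S$ such that every $S'\in\mathit{Prop}$ with $T\le S'$ is in $P$. A set $\mathcal{P}$ of pairs (program, rational) is observable iff $\{M\mid(M,q)\in\mathcal{P}\}$ is observable for every rational $q$. *)

theory Defs
  imports Complex_Main
begin

(* Variables: the high input H, the low output O, and further program variables. *)
datatype var = VH | VO | Var nat

(* Values: None plays the role of bottom (termination), Some v an ordinary (integer) value.
   The value space is infinite, so input domains are unbounded in size. *)
type_synonym val = "int option"

type_synonym store = "var \<Rightarrow> val"

type_synonym trace = "nat \<Rightarrow> store"
type_synonym ftrace = "store list"

definition conc :: "ftrace \<Rightarrow> trace \<Rightarrow> trace" where
  "conc t t' = (\<lambda>i. if i < length t then t ! i else t' (i - length t))"

definition input_dom :: "trace set \<Rightarrow> val set" where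
  "input_dom M = {t 0 VH | t. t \<in> M}"

definition deterministic :: "trace set \<Rightarrow> bool" where
  "deterministic M \<longleftrightarrow> (\<forall>t\<in>M. \<forall>t'\<in>M. t 0 VH = t' 0 VH \<longrightarrow> t = t')"

definition Prog :: "trace set set" where
  "Prog = {M. deterministic M \<and> finite (input_dom M) \<and> input_dom M \<noteq> {}}"

definition deterministic_fin :: "ftrace set \<Rightarrow> bool" where
  "deterministic_fin S \<longleftrightarrow>
     (\<forall>t\<in>S. \<forall>t'\<in>S. t \<noteq> [] \<longrightarrow> t' \<noteq> [] \<longrightarrow> (t ! 0) VH = (t' ! 0) VH \<longrightarrow> t = t')"

definition Obs :: "ftrace set set" where
  "Obs = {S. deterministic_fin S \<and> finite S}"

definition obs_le :: "ftrace set \<Rightarrow> trace set \<Rightarrow> bool" where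
  "obs_le S T \<longleftrightarrow> (\<forall>t\<in>S. \<exists>t'. conc t t' \<in> T)"

definition observable :: "trace set set \<Rightarrow> bool" where
  "observable P \<longleftrightarrow>
     (\<forall>S\<in>P. \<exists>T\<in>Obs. obs_le T S \<and> (\<forall>S'\<in>Prog. obs_le T S' \<longrightarrow> S' \<in> P))"

definition observable_pairs :: "(trace set \<times> rat) set \<Rightarrow> bool" where
  "observable_pairs P \<longleftrightarrow> (\<forall>q. observable {M. (M, q) \<in> P})"

definition trace_of :: "trace set \<Rightarrow> val \<Rightarrow> trace" where
  "trace_of M h = (THE t. t \<in> M \<and> t 0 VH = h)"

definition out :: "trace set \<Rightarrow> val \<Rightarrow> (nat \<Rightarrow> val)" where
  "out M h = (\<lambda>i. trace_of M h (Suc i) VO)"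

(* M(h) = o, with bottom (None) as wildcard *)
definition out_eq :: "(nat \<Rightarrow> val) \<Rightarrow> (nat \<Rightarrow> val) \<Rightarrow> bool" where
  "out_eq m y \<longleftrightarrow> (\<forall>i. y i = None \<or> m i = None \<or> m i = y i)"

definition mu_O :: "(val \<Rightarrow> real) \<Rightarrow> trace set \<Rightarrow> (nat \<Rightarrow> val) \<Rightarrow> real" where
  "mu_O \<mu> M y = (\<Sum>h\<in>{h \<in> input_dom M. out_eq (out M h) y}. \<mu> h)"

definition mu_HO :: "(val \<Rightarrow> real) \<Rightarrow> trace set \<Rightarrow> val \<Rightarrow> (nat \<Rightarrow> val) \<Rightarrow> real" where
  "mu_HO \<mu> M h y = (if h \<in> input_dom M \<and> out_eq (out M h) y then \<mu> h else 0)"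

definition V_H :: "(val \<Rightarrow> real) \<Rightarrow> trace set \<Rightarrow> real" where
  "V_H \<mu> M = (MAX h \<in> input_dom M. \<mu> h)"

definition V_HO :: "(val \<Rightarrow> real) \<Rightarrow> trace set \<Rightarrow> real" where
  "V_HO \<mu> M = (\<Sum>y \<in> out M ` input_dom M.
      mu_O \<mu> M y * (MAX h \<in> input_dom M. mu_HO \<mu> M h y / mu_O \<mu> M y))"

definition ME :: "(val \<Rightarrow> real) \<Rightarrow> trace set \<Rightarrow> real" where
  "ME \<mu> M = log 2 (1 / V_H \<mu> M) - log 2 (1 / V_HO \<mu> M)"

definition U :: "trace set \<Rightarrow> val \<Rightarrow> real" where
  "U M h = (if h \<in> input_dom M then 1 / real (card (input_dom M)) else 0)"

definition L_ME :: "(trace set \<times> rat) set" where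
  "L_ME = {(M, q). M \<in> Prog \<and> ME (U M) M > real_of_rat q}"

end

theory Submission
  imports Defs
begin

lemma out_eq_refl: "out_eq m m" by (simp add: out_eq_def)

lemma ME_eq:
  assumes "M \<in> Prog"
  shows "ME (U M) M = log 2 (real (card (out M ` input_dom M)))"
proof -
  define D where "D = input_dom M"
  have fin: "finite D" "D \<noteq> {}" using assms by (auto simp: Prog_def D_def)
  define n where "n = real (card D)"
  have npos: "n > 0" using fin by (simp add: n_def card_gt_0_iff)
  have UD: "\<And>h. U M h = (if h \<in> D then 1/n else 0)" by (simp add: U_def D_def n_def)
  have "(\<lambda>h. U M h) ` D = {1/n}" using fin by (auto simp: UD)
  hence VH: "V_H (U M) M = 1/n" by (simp add: V_H_def D_def[symmetric])
  have key: "mu_O (U M) M y * (MAX h\<in>D. mu_HO (U M) M h y / mu_O (U M) M y) = 1/n"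
    if y: "y \<in> out M ` D" for y
  proof -
    obtain h0 where h0: "h0 \<in> D" "y = out M h0" using y by auto
    define m where "m = mu_O (U M) M y"
    define C where "C = {h \<in> D. out_eq (out M h) y}"
    have Cfin: "finite C" using fin by (simp add: C_def)
    have "h0 \<in> C" using h0 by (simp add: C_def out_eq_refl)
    hence Cpos: "card C \<ge> 1" using Cfin
      by (metis One_nat_def Suc_leI card_gt_0_iff empty_iff)
    have "m = (\<Sum>h\<in>C. 1/n)" unfolding m_def mu_O_def
      by (rule sum.cong) (auto simp: C_def D_def UD)
    hence m: "m = real (card C) / n" by simp
    have mpos: "m > 0" using m Cpos npos by simp
    have img: "(\<lambda>h. mu_HO (U M) M h y / m) ` D \<subseteq> {(1/n)/m, 0}"
      by (auto simp: mu_HO_def UD D_def)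
    have mem: "(1/n)/m \<in> (\<lambda>h. mu_HO (U M) M h y / m) ` D"
      using h0 by (force simp: mu_HO_def UD D_def out_eq_refl)
    have "(MAX h\<in>D. mu_HO (U M) M h y / m) = (1/n)/m"
    proof (rule Max_eqI)
      show "finite ((\<lambda>h. mu_HO (U M) M h y / m) ` D)" using fin by simp
      show "(1/n)/m \<in> (\<lambda>h. mu_HO (U M) M h y / m) ` D" by (rule mem)
      fix z assume "z \<in> (\<lambda>h. mu_HO (U M) M h y / m) ` D"
      hence "z = (1/n)/m \<or> z = 0" using img by auto
      thus "z \<le> (1/n)/m" using npos mpos by auto
    qed
    thus ?thesis using mpos by (simp add: m_def[symmetric])
  qed
  define k where "k = card (out M ` D)"
  have kpos: "k > 0" using fin by (simp add: k_def card_gt_0_iff)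
  have "V_HO (U M) M = (\<Sum>y\<in>out M ` D. 1/n)"
    unfolding V_HO_def D_def[symmetric] by (rule sum.cong) (auto simp: key)
  hence VHO: "V_HO (U M) M = real k / n" by (simp add: k_def)
  have "ME (U M) M = log 2 n - log 2 (n / real k)"
    by (simp add: ME_def VH VHO)
  also have "\<dots> = log 2 (real k)" using npos kpos by (simp add: log_divide)
  finally show ?thesis by (simp add: k_def D_def)
qed

lemma trace_of_eq:
  assumes "deterministic M" "t \<in> M" shows "trace_of M (t 0 VH) = t"
  unfolding trace_of_def
  by (rule the_equality) (use assms in \<open>auto simp: deterministic_def\<close>)

lemma trace_of_mem:
  assumes "h \<in> input_dom M" "deterministic M"
  shows "trace_of M h \<in> M \<and> trace_of M h 0 VH = h"
proof -
  obtain t where "t \<in> M" "h = t 0 VH" using assms(1) by (auto simp: input_dom_def)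
  thus ?thesis using trace_of_eq[OF assms(2)] by auto
qed

lemma card_img_le:
  assumes "\<And>x y. x\<in>A \<Longrightarrow> y\<in>A \<Longrightarrow> f x \<noteq> f y \<Longrightarrow> g x \<noteq> g y" "finite A"
  shows "card (f ` A) \<le> card (g ` A)"
proof -
  define F where "F z = f (SOME x. x \<in> A \<and> g x = z)" for z
  have "f ` A = F ` g ` A"
  proof safe
    fix x assume x: "x \<in> A"
    have "\<exists>x'. x' \<in> A \<and> g x' = g x" using x by auto
    hence s: "(SOME x'. x' \<in> A \<and> g x' = g x) \<in> A \<and> g (SOME x'. x' \<in> A \<and> g x' = g x) = g x"
      by (rule someI_ex)
    hence "F (g x) = f x" unfolding F_def using assms(1) x by metis
    thus "f x \<in> F ` g ` A" using x by (metis image_eqI)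
    show "F (g x) \<in> f ` A" using s by (simp add: F_def)
  qed
  thus ?thesis using assms(2) by (metis card_image_le finite_imageI)
qed

theorem theorem5:
  shows "observable_pairs L_ME"
  unfolding observable_pairs_def observable_def
proof (intro allI ballI)
  fix q M assume "M \<in> {M. (M, q) \<in> L_ME}"
  hence MP: "M \<in> Prog" and gt: "ME (U M) M > real_of_rat q" by (auto simp: L_ME_def)
  define D where "D = input_dom M"
  have fin: "finite D" and det: "deterministic M" using MP by (auto simp: Prog_def D_def)
  define P where "P = {(h1, h2). h1 \<in> D \<and> h2 \<in> D \<and> out M h1 \<noteq> out M h2}"
  define idx where "idx p = (SOME i. out M (fst p) i \<noteq> out M (snd p) i)" for p
  have idx: "out M h1 (idx (h1,h2)) \<noteq> out M h2 (idx (h1,h2))" if "(h1,h2) \<in> P" for h1 h2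
  proof -
    have "\<exists>i. out M h1 i \<noteq> out M h2 i" using that by (auto simp: P_def)
    thus ?thesis unfolding idx_def by (simp add: someI_ex) (rule someI_ex)
  qed
  have Pfin: "finite P" by (rule finite_subset[of _ "D \<times> D"]) (auto simp: P_def fin)
  define N where "N = Suc (Suc (Max (idx ` P \<union> {0})))"
  have idxN: "Suc (idx p) < N" if "p \<in> P" for p
  proof -
    have "idx p \<le> Max (idx ` P \<union> {0})" using that Pfin by (intro Max_ge) auto
    thus ?thesis by (simp add: N_def)
  qed
  define pref where "pref h = map (trace_of M h) [0..<N]" for h
  define T where "T = pref ` D"
  have len: "length (pref h) = N" for h by (simp add: pref_def)
  have pref0: "pref h ! 0 = trace_of M h 0" for h by (simp add: pref_def N_def del: upt_Suc)
  have TObs: "T \<in> Obs"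
    unfolding Obs_def deterministic_fin_def T_def
  proof (safe)
    fix h1 h2 assume "h1 \<in> D" "h2 \<in> D" "(pref h1 ! 0) VH = (pref h2 ! 0) VH"
    thus "pref h1 = pref h2" using trace_of_mem[OF _ det] by (simp add: pref0 D_def)
  qed (use fin in auto)
  have conc_pref: "conc (pref h) (\<lambda>j. trace_of M h (j + N)) = trace_of M h" for h
    by (rule ext) (simp add: conc_def len pref_def)
  have le: "obs_le T M"
    unfolding obs_le_def T_def
  proof safe
    fix h assume "h \<in> D"
    thus "\<exists>t'. conc (pref h) t' \<in> M" using conc_pref trace_of_mem[OF _ det] by (metis D_def)
  qed
  show "\<exists>T\<in>Obs. obs_le T M \<and> (\<forall>S'\<in>Prog. obs_le T S' \<longrightarrow> S' \<in> {M. (M, q) \<in> L_ME})"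
  proof (intro bexI conjI ballI impI)
    show "T \<in> Obs" by (rule TObs)
    show "obs_le T M" by (rule le)
    fix S' assume S'P: "S' \<in> Prog" and le': "obs_le T S'"
    have det': "deterministic S'" and fin': "finite (input_dom S')" using S'P by (auto simp: Prog_def)
    have agree: "h \<in> input_dom S' \<and> out S' h i = out M h i" if hD: "h \<in> D" and iN: "Suc i < N" for h i
    proof -
      obtain t' where t': "conc (pref h) t' \<in> S'" using le' hD unfolding obs_le_def T_def by (meson image_eqI)
      have h0: "conc (pref h) t' 0 VH = h"
        using trace_of_mem[OF _ det] hD by (simp add: conc_def len pref0 D_def N_def)
      have "trace_of S' h = conc (pref h) t'" using trace_of_eq[OF det' t'] h0 by simp
      moreover have "h \<in> input_dom S'" using t' h0 unfolding input_dom_def by (metis (mono_tags, lifting) mem_Collect_eq)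
      ultimately show ?thesis using iN by (simp add: out_def conc_def len pref_def)
    qed
    have sub: "D \<subseteq> input_dom S'" using agree by (auto simp: N_def)
    have "card (out M ` D) \<le> card (out S' ` D)"
    proof (rule card_img_le[OF _ fin])
      fix h1 h2 assume h: "h1 \<in> D" "h2 \<in> D" "out M h1 \<noteq> out M h2"
      hence p: "(h1,h2) \<in> P" by (simp add: P_def)
      have "out S' h1 (idx (h1,h2)) \<noteq> out S' h2 (idx (h1,h2))"
        using idx[OF p] agree[OF h(1) idxN[OF p]] agree[OF h(2) idxN[OF p]] by simp
      thus "out S' h1 \<noteq> out S' h2" by metis
    qed
    also have "\<dots> \<le> card (out S' ` input_dom S')"
      using sub fin' by (intro card_mono) auto
    finally have cle: "card (out M ` D) \<le> card (out S' ` input_dom S')" .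
    have kpos: "card (out M ` D) > 0" using MP fin by (auto simp: Prog_def D_def card_gt_0_iff)
    have "ME (U M) M \<le> ME (U S') S'"
      unfolding ME_eq[OF MP] ME_eq[OF S'P] D_def[symmetric]
      using kpos cle by simp
    thus "S' \<in> {M. (M, q) \<in> L_ME}" using gt S'P by (simp add: L_ME_def)
  qed
qed

end
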